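(* Let $p$ and $q$ be primes with $\frac{3p-1}{2} < q < 2p-1$. Then $p$ and $q$ do not form a symmetric pair.
   Context: Two distinct primes $p$ and $q$ form a symmetric pair if $\gcd(p-1, q-1) = |p-q|$. *)

theory Defs
  imports Complex_Main "HOL-Computational_Algebra.Primes"
begin

definition symmetric_pair :: "nat \<Rightarrow> nat \<Rightarrow> bool" where
  "symmetric_pair p q \<longleftrightarrow> prime p \<and> prime q \<and> p \<noteq> q \<and>
     int (gcd (p - 1) (q - 1)) = \<bar>int p - int q\<bar>"

end

theory Submission
  imports Defs
begin

theorem lemma2:
  fixes p q :: nat
  assumes "prime p" and "prime q"
    and "(3 * real p - 1) / 2 < real q" and "real q < 2 * real p - 1"
  shows "\<not> symmetric_pair p q"
proof
  assume S: "symmetric_pair p q"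
  have p2: "p \<ge> 2" using assms(1) prime_ge_2_nat by blast
  have "3 * real p - 1 < 2 * real q" using assms(3) by (simp add: field_simps)
  then have "real (3 * p) < real (2 * q + 1)" by simp
  then have h1: "3 * p < 2 * q + 1" by linarith
  have "real (q + 1) < real (2 * p)" using assms(4) by simp
  then have h2: "q + 1 < 2 * p" by linarith
  have g: "gcd (p - 1) (q - 1) = q - p" using S h1 unfolding symmetric_pair_def by linarith
  have "(q - p) dvd (p - 1)" by (metis g gcd_dvd1)
  then obtain k where k: "p - 1 = (q - p) * k" by blast
  show False
  proof (cases k)
    case 0 then show ?thesis using k p2 by simp
  next
    case (Suc m)
    show ?thesis
    proof (cases m)
      case 0 then show ?thesis using k Suc h1 h2 by simp
    next
      case (Suc j)
      have "(q - p) * k \<ge> (q - p) * 2" using \<open>k = Suc m\<close> Suc by (intro mult_left_mono) auto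
      moreover have "q > p" using h1 p2 by linarith
      ultimately show ?thesis using k h1 p2 by (simp add: algebra_simps diff_mult_distrib2)
    qed
  qed
qed

end
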